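(* Let $\mathbb{H}\in\mathbb{C}^{t\times r}$ be a random matrix with $\mathbb{E}[\|\mathbb{H}\|_F^2]<\infty$ whose distribution is absolutely continuous with respect to Lebesgue measure on $\mathbb{C}^{t\times r}$, and let $\rho>0$. Then for every $R\in\mathbb{R}_+$ the infimum $$\inf_{Q\in\mathcal{U}_t}\Pr\big[\log\det(I_r+\mathbb{H}^HQ\mathbb{H})<R\big]$$ is attained, i.e., it is a minimum.
   Context: $\mathcal{U}_t=\{Q\in\mathbb{C}^{t\times t}:Q\succeq0,\ \operatorname{tr}Q\le\rho\}$; $\|A\|_F=\sqrt{\operatorname{tr}(AA^H)}$. *)

theory Defs
  imports "HOL-Analysis.Analysis" "HOL-Probability.Probability"
begin

text \<open>Complex matrices are represented as \<open>complex^'c^'r\<close> (rows indexed by \<open>'r\<close>,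
  columns by \<open>'c\<close>); dimensions are finite index types.\<close>

definition conj_transpose :: "complex^'c^'r \<Rightarrow> complex^'r^'c" where
  "conj_transpose A = (\<chi> i j. cnj (A $ j $ i))"

definition frob_norm :: "complex^'c^'r \<Rightarrow> real" where
  "frob_norm A = sqrt (Re (trace (A ** conj_transpose A)))"

definition quad_form :: "complex^'n^'n \<Rightarrow> complex^'n \<Rightarrow> complex" where
  "quad_form Q x = (\<Sum>i\<in>UNIV. \<Sum>j\<in>UNIV. cnj (x $ i) * Q $ i $ j * x $ j)"

definition psd :: "complex^'n^'n \<Rightarrow> bool" where
  "psd Q \<longleftrightarrow> conj_transpose Q = Q \<and> (\<forall>x. 0 \<le> Re (quad_form Q x))"

text \<open>The constraint set \<open>U_t = {Q \<succeq> 0, tr Q \<le> \<rho>}\<close> (the trace of a Hermitian matrix is real).\<close>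
definition U_set :: "real \<Rightarrow> (complex^'t^'t) set" where
  "U_set \<rho> = {Q. psd Q \<and> Re (trace Q) \<le> \<rho>}"

text \<open>\<open>log det (I_r + H^H Q H)\<close>; the determinant is real (and \<open>\<ge> 1\<close>) for \<open>Q \<succeq> 0\<close>.\<close>
definition logdet_rate :: "complex^'r^'t \<Rightarrow> complex^'t^'t \<Rightarrow> real" where
  "logdet_rate H Q = ln (Re (det (mat 1 + conj_transpose H ** Q ** H)))"

end

theory Submission
  imports Defs
begin

lemma ifm1: "(if P then (1::complex) else 0) * x = (if P then x else 0)" by simp
lemma ifm2: "x * (if P then (1::complex) else 0) = (if P then x else 0)" by simp
lemma ifm3: "(if P then (c::complex) else 0) * x = (if P then c * x else 0)" by simp
lemma ifm4: "x * (if P then (c::complex) else 0) = (if P then x * c else 0)" by simp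
lemma ifc: "cnj (if P then (c::complex) else 0) = (if P then cnj c else 0)" by simp

lemma quad_diag: "quad_form Q (\<chi> k. if k = i then 1 else 0) = Q $ i $ i"
  unfolding quad_form_def by (simp add: ifm1 ifm2 ifm3 ifm4 ifc)

lemma quad_two:
  assumes "i \<noteq> j"
  shows "quad_form Q (\<chi> k. if k = i then 1 else if k = j then c else 0) =
     Q$i$i + Q$i$j*c + cnj c * Q$j$i + cnj c * c * Q$j$j"
proof -
  have x: "(\<chi> k. if k = i then 1 else if k = j then c else 0) $ k = (if k = i then 1 else 0) + (if k = j then c else 0)" for k
    using assms by auto
  show ?thesis unfolding quad_form_def x
    using assms by (simp add: distrib_left distrib_right sum.distrib ifm1 ifm2 ifm3 ifm4 ifc mult.assoc)
qed

lemma herm: "conj_transpose Q = Q \<Longrightarrow> Q $ j $ i = cnj (Q $ i $ j)"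
  by (metis conj_transpose_def vec_lambda_beta)

lemma entry_bound:
  assumes "Q \<in> U_set \<rho>"
  shows "cmod (Q $ i $ j) \<le> 2 * \<rho>"
proof -
  have ps: "psd Q" and tr: "Re (trace Q) \<le> \<rho>" using assms by (auto simp: U_set_def)
  have H: "conj_transpose Q = Q" and Qf: "\<And>x. 0 \<le> Re (quad_form Q x)" using ps by (auto simp: psd_def)
  have d0: "0 \<le> Re (Q $ k $ k)" for k using Qf[of "\<chi> l. if l = k then 1 else 0"] by (simp add: quad_diag)
  have dle: "Re (Q $ k $ k) \<le> \<rho>" for k
  proof -
    have "Re (Q $ k $ k) \<le> (\<Sum>l\<in>UNIV. Re (Q $ l $ l))"
      by (rule member_le_sum) (auto simp: d0)
    also have "\<dots> = Re (trace Q)" by (simp add: trace_def Re_sum)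
    finally show ?thesis using tr by simp
  qed
  show ?thesis
  proof (cases "i = j")
    case True
    have "Im (Q $ i $ i) = 0" using herm[OF H, of i i] by (metis cnj.sel(2) neg_equal_zero)
    then have "cmod (Q $ i $ j) = \<bar>Re (Q $ i $ i)\<bar>" using True by (simp add: cmod_def)
    then show ?thesis using d0[of i] dle[of i] True \<open>Im (Q $ i $ i) = 0\<close> by simp
  next
    case False
    have hj: "Q $ j $ i = cnj (Q $ i $ j)" by (rule herm[OF H])
    have q: "0 \<le> Re (Q$i$i + Q$i$j*c + cnj c * Q$j$i + cnj c * c * Q$j$j)" for c
      using Qf[of "\<chi> k. if k = i then 1 else if k = j then c else 0"] quad_two[OF False] by simp
    have a1: "0 \<le> Re (Q$i$i) + 2 * Re (Q$i$j) + Re (Q$j$j)" using q[of 1] hj by simp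
    have a2: "0 \<le> Re (Q$i$i) - 2 * Re (Q$i$j) + Re (Q$j$j)" using q[of "-1"] hj by simp
    have a3: "0 \<le> Re (Q$i$i) - 2 * Im (Q$i$j) + Re (Q$j$j)" using q[of "\<i>"] hj by simp
    have a4: "0 \<le> Re (Q$i$i) + 2 * Im (Q$i$j) + Re (Q$j$j)" using q[of "-\<i>"] hj by simp
    have "cmod (Q $ i $ j) \<le> \<bar>Re (Q$i$j)\<bar> + \<bar>Im (Q$i$j)\<bar>" by (rule cmod_le)
    also have "\<dots> \<le> 2 * \<rho>" using a1 a2 a3 a4 dle[of i] dle[of j] by linarith
    finally show ?thesis .
  qed
qed

lemma cont_ct[continuous_intros]: "continuous_on S f \<Longrightarrow> continuous_on S (\<lambda>x. conj_transpose (f x))"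
  unfolding conj_transpose_def by (intro continuous_intros)

lemma cont_mult[continuous_intros]:
  fixes f :: "_ \<Rightarrow> complex^'n^'m" and g :: "_ \<Rightarrow> complex^'k^'n"
  shows "continuous_on S f \<Longrightarrow> continuous_on S g \<Longrightarrow> continuous_on S (\<lambda>x. f x ** g x)"
  unfolding matrix_matrix_mult_def by (intro continuous_intros)

lemma cont_det[continuous_intros]:
  fixes f :: "_ \<Rightarrow> complex^'n^'n"
  shows "continuous_on S f \<Longrightarrow> continuous_on S (\<lambda>x. det (f x))"
  unfolding det_def by (intro continuous_intros)

lemma closed_U: "closed (U_set \<rho> :: (complex^'t^'t) set)"
proof -
  have "U_set \<rho> = {Q::complex^'t^'t. conj_transpose Q = Q} \<inter> (\<Inter>x. {Q. 0 \<le> Re (quad_form Q x)}) \<inter> {Q. Re (trace Q) \<le> \<rho>}"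
    by (auto simp: U_set_def psd_def)
  also have "closed \<dots>"
    unfolding quad_form_def trace_def
    by (intro closed_Int closed_INT ballI closed_Collect_eq closed_Collect_le continuous_intros)
  finally show ?thesis .
qed

lemma bounded_U: "bounded (U_set \<rho> :: (complex^'t^'t) set)"
proof -
  have "norm Q \<le> (\<Sum>i\<in>(UNIV::'t set). \<Sum>j\<in>(UNIV::'t set). 2 * \<rho>)" if "Q \<in> U_set \<rho>" for Q :: "complex^'t^'t"
  proof -
    have "norm Q \<le> (\<Sum>i\<in>UNIV. norm (Q $ i))" unfolding norm_vec_def by (rule L2_set_le_sum) auto
    also have "\<dots> \<le> (\<Sum>i\<in>UNIV. \<Sum>j\<in>UNIV. norm (Q $ i $ j))"
      by (intro sum_mono) (unfold norm_vec_def, rule L2_set_le_sum, auto)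
    also have "\<dots> \<le> (\<Sum>i\<in>(UNIV::'t set). \<Sum>j\<in>(UNIV::'t set). 2 * \<rho>)"
      using entry_bound[OF that] by (intro sum_mono) auto
    finally show ?thesis .
  qed
  then show ?thesis unfolding bounded_iff by blast
qed

lemma compact_U: "compact (U_set \<rho> :: (complex^'t^'t) set)"
  using closed_U bounded_U compact_eq_bounded_closed by blast

lemma ln_abs: "ln \<bar>x\<bar> = ln (x::real)"
  by (cases "x = 0") (simp_all add: abs_raw_ln[symmetric])

lemma ln_less_char: "ln (x::real) < R \<longleftrightarrow> (x = 0 \<and> 0 < R) \<or> (x \<noteq> 0 \<and> \<bar>x\<bar> < exp R)"
proof (cases "x = 0")
  case False
  then have "0 < \<bar>x\<bar>" by simp
  then have "ln \<bar>x\<bar> < R \<longleftrightarrow> \<bar>x\<bar> < exp R" by (metis exp_less_cancel_iff exp_ln)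
  then show ?thesis using False by (simp add: ln_abs)
qed simp

lemma open_ln_less: "open {x::real. ln x < R}"
proof (cases "R > 0")
  case True
  have "{x::real. ln x < R} = {x. \<bar>x\<bar> < exp R}"
    using True by (auto simp: ln_less_char)
  then show ?thesis by (simp add: open_Collect_less continuous_intros)
next
  case False
  have "{x::real. ln x < R} = {x. \<bar>x\<bar> < exp R} \<inter> {x. x \<noteq> 0}"
    using False by (auto simp: ln_less_char)
  then show ?thesis by (simp add: open_Collect_less open_Collect_neq continuous_intros open_Int)
qed

lemma fatou_sets:
  assumes "finite_measure M" "A \<in> sets M" "\<And>n. B n \<in> sets M"
    "\<And>\<omega>. \<omega> \<in> A \<Longrightarrow> eventually (\<lambda>n. \<omega> \<in> B n) sequentially"
    "(\<lambda>n. measure M (B n)) \<longlonglongrightarrow> m"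
  shows "measure M A \<le> m"
proof -
  interpret finite_measure M by fact
  define C where "C N = A \<inter> (\<Inter>k. B (N + k))" for N
  have Cs: "C N \<in> sets M" for N unfolding C_def using assms(2,3) by auto
  have inc: "incseq C"
  proof (rule incseq_SucI)
    fix N show "C N \<subseteq> C (Suc N)" unfolding C_def
      by auto (metis add_Suc_right add_Suc)
  qed
  have U: "(\<Union>N. C N) = A"
  proof
    show "(\<Union>N. C N) \<subseteq> A" unfolding C_def by auto
    show "A \<subseteq> (\<Union>N. C N)"
    proof
      fix \<omega> assume "\<omega> \<in> A"
      then have "eventually (\<lambda>n. \<omega> \<in> B n) sequentially" by (rule assms(4))
      then obtain N where N: "\<forall>n\<ge>N. \<omega> \<in> B n" unfolding eventually_sequentially by blast
      have "\<forall>k. \<omega> \<in> B (N + k)" using N by simp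
      then have "\<omega> \<in> C N" using \<open>\<omega> \<in> A\<close> unfolding C_def by simp
      then show "\<omega> \<in> (\<Union>N. C N)" by blast
    qed
  qed
  have lim: "(\<lambda>N. measure M (C N)) \<longlonglongrightarrow> measure M A"
    using finite_Lim_measure_incseq[of C] Cs inc U by auto
  have "measure M (C N) \<le> m" for N
  proof (rule LIMSEQ_le_const[OF assms(5)], intro exI allI impI)
    fix n assume "N \<le> n"
    then have "C N \<subseteq> B n" unfolding C_def by clarsimp (metis le_add_diff_inverse)
    then show "measure M (C N) \<le> measure M (B n)" by (rule finite_measure_mono) (rule assms(3))
  qed
  then show ?thesis by (intro LIMSEQ_le_const2[OF lim]) auto
qed

lemma cont_D: "continuous_on UNIV (\<lambda>Q. Re (det (mat 1 + conj_transpose (X::complex^'r^'t) ** Q ** X)))"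
  by (intro continuous_intros)

lemma cont_D2: "continuous_on UNIV (\<lambda>X. Re (det (mat 1 + conj_transpose (X::complex^'r^'t) ** Q ** X)))"
  by (intro continuous_intros)

theorem proposition1:
  fixes M :: "'a measure" and H :: "'a \<Rightarrow> complex^'r^'t" and \<rho> :: real
  assumes "prob_space M"
    and "H \<in> borel_measurable M"
    and "(\<integral>\<^sup>+ \<omega>. ennreal ((frob_norm (H \<omega>))\<^sup>2) \<partial>M) < \<infinity>"
    and "absolutely_continuous lborel (distr M borel H)"
    and "\<rho> > 0"
  shows "\<forall>R::real. R \<ge> 0 \<longrightarrow>
    (\<exists>Q0\<in>U_set \<rho>. measure M {\<omega>\<in>space M. logdet_rate (H \<omega>) Q0 < R}
        = (INF Q\<in>U_set \<rho>. measure M {\<omega>\<in>space M. logdet_rate (H \<omega>) Q < R}))"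
proof (intro allI impI)
  fix R :: real assume "R \<ge> 0"
  interpret prob_space M by fact
  define S where "S Q = {\<omega>\<in>space M. logdet_rate (H \<omega>) Q < R}" for Q
  define f where "f Q = measure M (S Q)" for Q
  define U where "U = (U_set \<rho> :: (complex^'t^'t) set)"
  define m where "m = (INF Q\<in>U. f Q)"
  have meas: "S Q \<in> sets M" for Q
  proof -
    have "(\<lambda>X. Re (det (mat 1 + conj_transpose (X::complex^'r^'t) ** Q ** X))) \<in> borel_measurable borel"
      by (rule borel_measurable_continuous_onI[OF cont_D2])
    then have "(\<lambda>\<omega>. Re (det (mat 1 + conj_transpose (H \<omega>) ** Q ** H \<omega>))) \<in> borel_measurable M"
      using assms(2) by (rule measurable_compose[rotated])
    then have "(\<lambda>\<omega>. logdet_rate (H \<omega>) Q) \<in> borel_measurable M"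
      unfolding logdet_rate_def by measurable
    then show ?thesis unfolding S_def by measurable
  qed
  have Une: "0 \<in> U"
    using assms(5) by (simp add: U_def U_set_def psd_def quad_form_def conj_transpose_def trace_def vec_eq_iff)
  have bdd: "bdd_below (f ` U)" by (rule bdd_belowI[of _ 0]) (auto simp: f_def)
  have "\<exists>Q\<in>U. f Q < m + 1 / Suc n" for n :: nat
  proof -
    have "m < m + 1 / Suc n" by simp
    then show ?thesis unfolding m_def using cINF_less_iff[OF _ bdd] Une by blast
  qed
  then obtain Qs where Qs: "\<And>n. Qs n \<in> U" "\<And>n. f (Qs n) < m + 1 / Suc n" by metis
  have lb: "m \<le> f Q" if "Q \<in> U" for Q unfolding m_def by (rule cINF_lower[OF bdd that])
  have flim: "(\<lambda>n. f (Qs n)) \<longlonglongrightarrow> m"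
  proof (rule tendsto_sandwich[of "\<lambda>n. m" _ _ "\<lambda>n. m + 1 / Suc n"])
    show "\<forall>\<^sub>F n in sequentially. m \<le> f (Qs n)" using lb Qs(1) by auto
    show "\<forall>\<^sub>F n in sequentially. f (Qs n) \<le> m + 1 / Suc n" by (rule always_eventually) (use Qs(2) less_imp_le in blast)
    show "(\<lambda>n. m + 1 / Suc n) \<longlonglongrightarrow> m"
      using tendsto_add[OF tendsto_const LIMSEQ_inverse_real_of_nat] by (simp add: inverse_eq_divide)
  qed simp
  have "seq_compact U" unfolding U_def by (rule compact_imp_seq_compact[OF compact_U])
  then obtain l r where l: "l \<in> U" "strict_mono r" "(Qs \<circ> r) \<longlonglongrightarrow> l"
    using seq_compactE Qs(1) by metis
  have flim2: "(\<lambda>n. f (Qs (r n))) \<longlonglongrightarrow> m"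
    using LIMSEQ_subseq_LIMSEQ[OF flim l(2)] by (simp add: o_def)
  have ev: "eventually (\<lambda>n. \<omega> \<in> S (Qs (r n))) sequentially" if "\<omega> \<in> S l" for \<omega>
  proof -
    let ?D = "\<lambda>Q. Re (det (mat 1 + conj_transpose (H \<omega>) ** Q ** H \<omega>))"
    have "(\<lambda>n. ?D ((Qs \<circ> r) n)) \<longlonglongrightarrow> ?D l"
      by (rule continuous_on_tendsto_compose[OF cont_D l(3)]) auto
    moreover have "?D l \<in> {x. ln x < R}" using that by (simp add: S_def logdet_rate_def)
    ultimately have "eventually (\<lambda>n. ?D ((Qs \<circ> r) n) \<in> {x. ln x < R}) sequentially"
      using topological_tendstoD open_ln_less by blast
    then show ?thesis using that by (auto simp: S_def logdet_rate_def elim: eventually_mono)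
  qed
  have "f l \<le> m" unfolding f_def
    by (rule fatou_sets[OF _ meas meas ev]) (use flim2 in \<open>auto simp: f_def finite_measure_axioms\<close>)
  then have "f l = m" using lb[OF l(1)] by simp
  then show "\<exists>Q0\<in>U_set \<rho>. measure M {\<omega>\<in>space M. logdet_rate (H \<omega>) Q0 < R}
        = (INF Q\<in>U_set \<rho>. measure M {\<omega>\<in>space M. logdet_rate (H \<omega>) Q < R})"
    using l(1) unfolding m_def f_def S_def U_def by blast
qed
end
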